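(* Let $\mathcal{A}\in\mathbb{R}^{d_1\times\cdots\times d_k}$ be an arbitrary order-$k$ real tensor and let $\pi_1,\pi_2\in\mathcal{P}_{[k]}$ be any two partitions. Then: (a) for any $1\le p\le 2$, \[ \frac{[\dim(\mathcal{A})]^{-1/p}}{[\dim_{\mathcal{A}}(\pi_1,\pi_2)]^{-1/2}}\|\mathrm{Unfold}_{\pi_1}(\mathcal{A})\|_p\le\|\mathrm{Unfold}_{\pi_2}(\mathcal{A})\|_p\le\frac{[\dim(\mathcal{A})]^{1/p}}{[\dim_{\mathcal{A}}(\pi_2,\pi_1)]^{1/2}}\|\mathrm{Unfold}_{\pi_1}(\mathcal{A})\|_p; \] (b) for any $2\le p\le\infty$, \[ \frac{[\dim(\mathcal{A})]^{\frac1p-1}}{[\dim_{\mathcal{A}}(\pi_1,\pi_2)]^{-1/2}}\|\mathrm{Unfold}_{\pi_1}(\mathcal{A})\|_p\le\|\mathrm{Unfold}_{\pi_2}(\mathcal{A})\|_p\le\frac{[\dim(\mathcal{A})]^{1-\frac1p}}{[\dim_{\mathcal{A}}(\pi_2,\pi_1)]^{1/2}}\|\mathrm{Unfold}_{\pi_1}(\mathcal{A})\|_p . \]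
   Context: $\dim(\mathcal{A})=\prod_{n=1}^k d_n$. For a real tensor $\mathcal{T}\in\mathbb{R}^{e_1\times\cdots\times e_m}$ and $1\le p\le\infty$, $\|\mathcal{T}\|_p=\sup\{\sum t_{i_1\dots i_m}x^{(1)}_{i_1}\cdots x^{(m)}_{i_m}:\ \mathbf{x}_n\in\mathbb{R}^{e_n},\ \|\mathbf{x}_n\|_p=1\}$ (the norm of the associated multilinear functional, with $\|\mathbf{x}_n\|_p$ the vector $l^p$-norm). $\mathcal{P}_{[k]}$ is the set of partitions of $[k]$. Unfolding: for $\pi=\{B_1,\dots,B_\ell\}\in\mathcal{P}_{[k]}$, $\mathrm{Unfold}_\pi(\mathcal{A})$ is the order-$\ell$ tensor of dimensions $(\prod_{j\in B_1}d_j,\dots,\prod_{j\in B_\ell}d_j)$ whose entry at $(m_1,\dots,m_\ell)$ is $a_{i_1\dots i_k}$, where $m_j$ corresponds to $(i_r)_{r\in B_j}$ under a fixed bijection $\prod_{r\in B_j}[d_r]\to[\prod_{r\in B_j}d_r]$. For $\pi_1,\pi_2\in\mathcal{P}_{[k]}$, $\dim_{\mathcal{A}}(\pi_1,\pi_2)=\prod_{B\in\pi_1}\max_{B'\in\pi_2}D_{\mathcal{A}}(B,B')$ with $D_{\mathcal{A}}(B,B')=\prod_{n\in B\cap B'}d_n$ if $B\cap B'\ne\emptyset$ and $0$ otherwise. *)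

theory Defs
  imports Complex_Main "HOL-Library.Disjoint_Sets" "HOL-Library.Extended_Real" "HOL-Library.FuncSet"
begin

text \<open>A tensor whose modes are indexed by a finite set M (of any type)
  with dimensions e j (j in M) is a function T from index functions to reals; the
  meaningful entries are those at idx in PiE M (%j. {..<e j}) (0-based indices).\<close>

definition inv_exp :: "ereal \<Rightarrow> real" where
  "inv_exp p = (if p = \<infinity> then 0 else 1 / real_of_ereal p)"

definition lpnorm :: "ereal \<Rightarrow> nat \<Rightarrow> (nat \<Rightarrow> real) \<Rightarrow> real" where
  "lpnorm p n v = (if p = \<infinity> then Max (insert 0 ((\<lambda>i. \<bar>v i\<bar>) ` {..<n}))
                   else (\<Sum>i<n. \<bar>v i\<bar> powr real_of_ereal p) powr (1 / real_of_ereal p))"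

definition tensor_pnorm :: "ereal \<Rightarrow> 'm set \<Rightarrow> ('m \<Rightarrow> nat) \<Rightarrow> (('m \<Rightarrow> nat) \<Rightarrow> real) \<Rightarrow> real" where
  "tensor_pnorm p M e T = Sup {(\<Sum>idx\<in>PiE M (\<lambda>j. {..<e j}). T idx * (\<Prod>j\<in>M. x j (idx j))) | x.
       \<forall>j\<in>M. lpnorm p (e j) (x j) = 1}"

text \<open>Fixed bijection {..<prod_{s in B} d s} -> prod_{r in B} {..<d r} (mixed radix, ascending r).\<close>
definition block_digit :: "(nat \<Rightarrow> nat) \<Rightarrow> nat set \<Rightarrow> nat \<Rightarrow> nat \<Rightarrow> nat" where
  "block_digit d B r m = (m div (\<Prod>s\<in>{s\<in>B. s < r}. d s)) mod d r"

text \<open>Unfolding of the order-k tensor A (modes 1..k, dims d) along partition pi.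
  The modes of the unfolded tensor are indexed by the blocks of pi themselves.\<close>
definition unfold :: "nat \<Rightarrow> (nat \<Rightarrow> nat) \<Rightarrow> nat set set \<Rightarrow> ((nat \<Rightarrow> nat) \<Rightarrow> real)
                      \<Rightarrow> ((nat set \<Rightarrow> nat) \<Rightarrow> real)" where
  "unfold k d \<pi> A = (\<lambda>m. A (\<lambda>r. if r \<in> {1..k}
        then (let B = (THE B. B \<in> \<pi> \<and> r \<in> B) in block_digit d B r (m B)) else undefined))"

definition unfold_dims :: "(nat \<Rightarrow> nat) \<Rightarrow> nat set \<Rightarrow> nat" where
  "unfold_dims d B = (\<Prod>r\<in>B. d r)"

definition unfold_norm :: "ereal \<Rightarrow> nat \<Rightarrow> (nat \<Rightarrow> nat) \<Rightarrow> nat set set \<Rightarrow> ((nat \<Rightarrow> nat) \<Rightarrow> real) \<Rightarrow> real" where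
  "unfold_norm p k d \<pi> A = tensor_pnorm p \<pi> (unfold_dims d) (unfold k d \<pi> A)"

definition tdim :: "nat \<Rightarrow> (nat \<Rightarrow> nat) \<Rightarrow> real" where
  "tdim k d = (\<Prod>n\<in>{1..k}. real (d n))"

definition Dblk :: "(nat \<Rightarrow> nat) \<Rightarrow> nat set \<Rightarrow> nat set \<Rightarrow> real" where
  "Dblk d B B' = (if B \<inter> B' \<noteq> {} then (\<Prod>n\<in>B \<inter> B'. real (d n)) else 0)"

definition dim_pair :: "(nat \<Rightarrow> nat) \<Rightarrow> nat set set \<Rightarrow> nat set set \<Rightarrow> real" where
  "dim_pair d \<pi>1 \<pi>2 = (\<Prod>B\<in>\<pi>1. Max ((\<lambda>B'. Dblk d B B') ` \<pi>2))"

end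

theory Submission
  imports Defs "HOL-Analysis.Convex"
begin


lemma powr_sum_super:
  fixes w :: "'a \<Rightarrow> real"
  assumes "finite S" "\<And>i. i \<in> S \<Longrightarrow> w i \<ge> 0" "t \<ge> 1"
  shows "(\<Sum>i\<in>S. w i powr t) \<le> (\<Sum>i\<in>S. w i) powr t"
proof -
  let ?W = "\<Sum>i\<in>S. w i"
  have W0: "?W \<ge> 0" using assms by (simp add: sum_nonneg)
  have "(\<Sum>i\<in>S. w i powr t) \<le> (\<Sum>i\<in>S. w i * ?W powr (t - 1))"
  proof (rule sum_mono)
    fix i assume i: "i \<in> S"
    show "w i powr t \<le> w i * ?W powr (t - 1)"
    proof (cases "w i = 0")
      case True then show ?thesis by simp
    next
      case False
      then have wp: "w i > 0" using assms i by force
      have "w i \<le> ?W" using assms i by (intro member_le_sum) auto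
      then have "w i powr (t-1) \<le> ?W powr (t-1)" using wp assms by (intro powr_mono2) auto
      moreover have "w i powr t = w i * w i powr (t-1)" using powr_mult_base[OF less_imp_le[OF wp], of "t-1"]
        by simp
      ultimately show ?thesis using wp by (simp add: mult_left_mono)
    qed
  qed
  also have "\<dots> = ?W * ?W powr (t - 1)" by (simp add: sum_distrib_right)
  also have "\<dots> = ?W powr t"
  proof (cases "?W = 0")
    case True then show ?thesis using assms by simp
  next
    case False then have "?W > 0" using W0 by simp
    then show ?thesis using powr_mult_base[of ?W "t-1"] by simp
  qed
  finally show ?thesis .
qed

lemma powr_sum_jensen:
  fixes w :: "'a \<Rightarrow> real"
  assumes "finite S" "\<And>i. i \<in> S \<Longrightarrow> w i \<ge> 0" "t \<ge> 1"
  shows "(\<Sum>i\<in>S. w i) powr t \<le> real (card S) powr (t - 1) * (\<Sum>i\<in>S. w i powr t)"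
proof -
  define S' where "S' = {i\<in>S. w i > 0}"
  have fS': "finite S'" using assms unfolding S'_def by simp
  have sum1: "(\<Sum>i\<in>S. w i) = (\<Sum>i\<in>S'. w i)"
    unfolding S'_def using assms by (intro sum.mono_neutral_right) force+
  have sum2: "(\<Sum>i\<in>S. w i powr t) = (\<Sum>i\<in>S'. w i powr t)"
    unfolding S'_def using assms by (intro sum.mono_neutral_right) force+
  show ?thesis
  proof (cases "S' = {}")
    case True then show ?thesis using sum1 assms by (simp, intro mult_nonneg_nonneg sum_nonneg) auto
  next
    case False
    let ?m = "real (card S')"
    have m0: "?m > 0" using False fS' by (simp add: card_gt_0_iff)
    have "(\<lambda>x. x powr t) (\<Sum>i\<in>S'. (1/?m) *\<^sub>R w i) \<le> (\<Sum>i\<in>S'. (1/?m) * (\<lambda>x. x powr t) (w i))"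
      using fS' False powr_convex[OF assms(3)] m0
      by (intro convex_on_sum) (auto simp: S'_def)
    then have "((\<Sum>i\<in>S'. w i) / ?m) powr t \<le> (\<Sum>i\<in>S'. w i powr t) / ?m"
      by (simp add: sum_distrib_left[symmetric] sum_divide_distrib[symmetric])
    moreover have "((\<Sum>i\<in>S'. w i) / ?m) powr t = (\<Sum>i\<in>S'. w i) powr t / ?m powr t"
      using m0 by (intro powr_divide; auto intro: sum_nonneg simp: S'_def)
    ultimately have "(\<Sum>i\<in>S'. w i) powr t \<le> ?m powr t * ((\<Sum>i\<in>S'. w i powr t) / ?m)"
      using m0 by (simp add: divide_le_eq mult.commute)
    also have "\<dots> = ?m powr (t - 1) * (\<Sum>i\<in>S'. w i powr t)"
      using m0 by (simp add: powr_diff)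
    also have "\<dots> \<le> real (card S) powr (t - 1) * (\<Sum>i\<in>S'. w i powr t)"
    proof (rule mult_right_mono)
      have "card S' \<le> card S" unfolding S'_def using assms by (intro card_mono) auto
      then show "?m powr (t - 1) \<le> real (card S) powr (t - 1)" using m0 assms by (intro powr_mono2) auto
      show "0 \<le> (\<Sum>i\<in>S'. w i powr t)" by (simp add: sum_nonneg)
    qed
    finally show ?thesis using sum1 sum2 by simp
  qed
qed

lemma lpnorm_fin: "p \<noteq> \<infinity> \<Longrightarrow> lpnorm p n v = (\<Sum>i<n. \<bar>v i\<bar> powr real_of_ereal p) powr (1 / real_of_ereal p)"
  by (simp add: lpnorm_def)

lemma lpnorm_inf: "lpnorm \<infinity> n v = Max (insert 0 ((\<lambda>i. \<bar>v i\<bar>) ` {..<n}))"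
  by (simp add: lpnorm_def)

lemma lpnorm_nonneg: "lpnorm p n v \<ge> 0"
  by (auto simp: lpnorm_def Max_ge_iff)

lemma ereal_ge1_cases:
  assumes "(1::ereal) \<le> p"
  obtains "p = \<infinity>" | P where "p = ereal P" "P \<ge> 1"
  using assms by (cases p) auto

lemma lpnorm_entry:
  assumes "1 \<le> p" "i < n"
  shows "\<bar>v i\<bar> \<le> lpnorm p n v"
  using assms(1)
proof (cases rule: ereal_ge1_cases)
  case 1 then show ?thesis using assms by (auto simp: lpnorm_inf Max_ge_iff)
next
  case (2 P)
  have "\<bar>v i\<bar> powr P \<le> (\<Sum>i<n. \<bar>v i\<bar> powr P)"
    using assms by (intro member_le_sum) auto
  then have "(\<bar>v i\<bar> powr P) powr (1/P) \<le> (\<Sum>i<n. \<bar>v i\<bar> powr P) powr (1/P)"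
    using 2 by (intro powr_mono2) auto
  then show ?thesis using 2 by (simp add: lpnorm_fin powr_powr)
qed

lemma lpnorm_zeroD:
  assumes "1 \<le> p" "i < n" "lpnorm p n v = 0"
  shows "v i = 0"
  using lpnorm_entry[OF assms(1,2), of v] assms(3) by simp

lemma lpnorm_scale:
  assumes "1 \<le> p"
  shows "lpnorm p n (\<lambda>i. c * v i) = \<bar>c\<bar> * lpnorm p n v"
  using assms
proof (cases rule: ereal_ge1_cases)
  case 1
  have "mono ((*) \<bar>c\<bar>)" by (auto simp: mono_def mult_left_mono)
  then have "\<bar>c\<bar> * Max (insert 0 ((\<lambda>i. \<bar>v i\<bar>) ` {..<n})) = Max ((*) \<bar>c\<bar> ` insert 0 ((\<lambda>i. \<bar>v i\<bar>) ` {..<n}))"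
    by (intro mono_Max_commute) auto
  also have "(*) \<bar>c\<bar> ` insert 0 ((\<lambda>i. \<bar>v i\<bar>) ` {..<n}) = insert 0 ((\<lambda>i. \<bar>c * v i\<bar>) ` {..<n})"
    by (auto simp: abs_mult image_image)
  finally show ?thesis using 1 by (simp add: lpnorm_inf)
next
  case (2 P)
  have "(\<Sum>i<n. \<bar>c * v i\<bar> powr P) = \<bar>c\<bar> powr P * (\<Sum>i<n. \<bar>v i\<bar> powr P)"
    by (simp add: abs_mult powr_mult sum_distrib_left)
  then have "(\<Sum>i<n. \<bar>c * v i\<bar> powr P) powr (1/P) = (\<bar>c\<bar> powr P) powr (1/P) * (\<Sum>i<n. \<bar>v i\<bar> powr P) powr (1/P)"
    by (simp add: powr_mult sum_nonneg)
  also have "(\<bar>c\<bar> powr P) powr (1/P) = \<bar>c\<bar>" using 2 by (simp add: powr_powr)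
  finally show ?thesis using 2 by (simp add: lpnorm_fin)
qed

lemma lpnorm_unit:
  assumes "1 \<le> p" "n \<ge> 1"
  shows "lpnorm p n (\<lambda>i. if i = 0 then 1 else 0) = 1"
  using assms(1)
proof (cases rule: ereal_ge1_cases)
  case 1
  have "insert 0 ((\<lambda>i. \<bar>if i = 0 then 1 else 0\<bar>) ` {..<n}) = {0, 1::real}"
    using assms(2) by (auto simp: image_iff intro!: bexI[of _ 0] bexI[of _ "0::nat"])
  then show ?thesis using 1 by (simp add: lpnorm_inf)
next
  case (2 P)
  have "(\<Sum>i<n. \<bar>if i = 0 then 1 else 0::real\<bar> powr P) = (\<Sum>i<n. if i = 0 then 1 else 0)"
    by (intro sum.cong) auto
  also have "\<dots> = 1" using assms(2) by (simp add: sum.delta)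
  finally show ?thesis using 2 by (simp add: lpnorm_fin)
qed

lemma lpnorm_mono_exp:
  assumes "1 \<le> p" "p \<le> q"
  shows "lpnorm q n v \<le> lpnorm p n v"
proof -
  from assms(1) show ?thesis
  proof (cases rule: ereal_ge1_cases)
    case 1 then show ?thesis using assms by simp
  next
    case (2 P) note hP = this
    from order_trans[OF assms] show ?thesis
    proof (cases rule: ereal_ge1_cases)
      case 1
      then show ?thesis using lpnorm_entry[OF assms(1), of _ n v] lpnorm_nonneg[of p n v]
        by (auto simp: lpnorm_inf Max_le_iff)
    next
      case (2 Q) note hQ = this
      have PQ: "P \<le> Q" using assms hP hQ by simp
      have "(\<Sum>i<n. (\<bar>v i\<bar> powr P) powr (Q/P)) \<le> (\<Sum>i<n. \<bar>v i\<bar> powr P) powr (Q/P)"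
        using hP PQ by (intro powr_sum_super) auto
      then have "(\<Sum>i<n. \<bar>v i\<bar> powr Q) \<le> (\<Sum>i<n. \<bar>v i\<bar> powr P) powr (Q/P)"
        using hP by (simp add: powr_powr)
      then have "(\<Sum>i<n. \<bar>v i\<bar> powr Q) powr (1/Q) \<le> ((\<Sum>i<n. \<bar>v i\<bar> powr P) powr (Q/P)) powr (1/Q)"
        using hQ by (intro powr_mono2) (auto intro: sum_nonneg)
      also have "\<dots> = (\<Sum>i<n. \<bar>v i\<bar> powr P) powr (1/P)"
        using hP hQ by (simp add: powr_powr)
      finally show ?thesis using hP hQ by (simp add: lpnorm_fin)
    qed
  qed
qed

lemma lpnorm_mean:
  assumes "1 \<le> p" "p \<le> q" "n \<ge> 1"
  shows "lpnorm p n v \<le> real n powr (inv_exp p - inv_exp q) * lpnorm q n v"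
proof -
  have n0: "real n > 0" using assms by simp
  from assms(1) show ?thesis
  proof (cases rule: ereal_ge1_cases)
    case 1 then show ?thesis using assms by (simp add: inv_exp_def)
  next
    case (2 P) note hP = this
    from order_trans[OF assms(1,2)] show ?thesis
    proof (cases rule: ereal_ge1_cases)
      case 1
      define M where "M = lpnorm q n v"
      have M0: "M \<ge> 0" unfolding M_def by (rule lpnorm_nonneg)
      have "\<And>i. i < n \<Longrightarrow> \<bar>v i\<bar> \<le> M" unfolding M_def using 1 by (auto simp: lpnorm_inf Max_ge_iff)
      then have "(\<Sum>i<n. \<bar>v i\<bar> powr P) \<le> (\<Sum>i<n. M powr P)"
        using hP by (intro sum_mono powr_mono2) auto
      also have "\<dots> = real n * M powr P" by simp
      finally have "(\<Sum>i<n. \<bar>v i\<bar> powr P) powr (1/P) \<le> (real n * M powr P) powr (1/P)"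
        using hP by (intro powr_mono2) (auto intro: sum_nonneg)
      also have "\<dots> = real n powr (1/P) * M"
        using hP M0 by (simp add: powr_mult powr_powr)
      finally show ?thesis using 1 hP by (simp add: lpnorm_fin inv_exp_def M_def)
    next
      case (2 Q) note hQ = this
      have PQ: "P \<le> Q" using assms hP hQ by simp
      have "(\<Sum>i<n. \<bar>v i\<bar> powr P) powr (Q/P) \<le> real (card {..<n}) powr (Q/P - 1) * (\<Sum>i<n. (\<bar>v i\<bar> powr P) powr (Q/P))"
        using hP PQ by (intro powr_sum_jensen) auto
      then have "(\<Sum>i<n. \<bar>v i\<bar> powr P) powr (Q/P) \<le> real n powr (Q/P - 1) * (\<Sum>i<n. \<bar>v i\<bar> powr Q)"
        using hP by (simp add: powr_powr)
      then have "((\<Sum>i<n. \<bar>v i\<bar> powr P) powr (Q/P)) powr (1/Q) \<le> (real n powr (Q/P - 1) * (\<Sum>i<n. \<bar>v i\<bar> powr Q)) powr (1/Q)"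
        using hQ by (intro powr_mono2) (auto intro: sum_nonneg)
      also have "\<dots> = real n powr ((Q/P - 1) / Q) * (\<Sum>i<n. \<bar>v i\<bar> powr Q) powr (1/Q)"
        using hQ by (simp add: powr_mult powr_powr sum_nonneg)
      also have "(Q/P - 1) / Q = 1/P - 1/Q" using hP hQ by (simp add: field_simps)
      finally show ?thesis using hP hQ by (simp add: lpnorm_fin inv_exp_def powr_powr)
    qed
  qed
qed




definition Fm :: "'m set \<Rightarrow> ('m \<Rightarrow> nat) \<Rightarrow> (('m \<Rightarrow> nat) \<Rightarrow> real) \<Rightarrow> ('m \<Rightarrow> nat \<Rightarrow> real) \<Rightarrow> real" where
  "Fm M e T x = (\<Sum>idx\<in>PiE M (\<lambda>j. {..<e j}). T idx * (\<Prod>j\<in>M. x j (idx j)))"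

lemma tensor_pnorm_Fm: "tensor_pnorm p M e T = Sup {Fm M e T x | x. \<forall>j\<in>M. lpnorm p (e j) (x j) = 1}"
  by (simp add: tensor_pnorm_def Fm_def)

locale tsetup =
  fixes p :: ereal and M :: "'m set" and e :: "'m \<Rightarrow> nat" and T :: "('m \<Rightarrow> nat) \<Rightarrow> real"
  assumes finM: "finite M" and e1: "\<And>j. j \<in> M \<Longrightarrow> e j \<ge> 1" and p1: "1 \<le> p"
begin

abbreviation "unit x \<equiv> (\<forall>j\<in>M. lpnorm p (e j) (x j) = 1)"
abbreviation "SS \<equiv> {Fm M e T x | x. unit x}"

lemma Fm_bound:
  assumes "unit x" shows "\<bar>Fm M e T x\<bar> \<le> (\<Sum>idx\<in>PiE M (\<lambda>j. {..<e j}). \<bar>T idx\<bar>)"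
  unfolding Fm_def
proof (rule order_trans[OF sum_abs], rule sum_mono)
  fix idx assume idx: "idx \<in> PiE M (\<lambda>j. {..<e j})"
  have "\<bar>\<Prod>j\<in>M. x j (idx j)\<bar> \<le> 1"
    unfolding abs_prod
  proof (rule prod_le_1)
    fix j assume "j \<in> M"
    then show "0 \<le> \<bar>x j (idx j)\<bar> \<and> \<bar>x j (idx j)\<bar> \<le> 1"
      using lpnorm_entry[OF p1, of "idx j" "e j" "x j"] assms idx by (auto simp: PiE_iff)
  qed
  then show "\<bar>T idx * (\<Prod>j\<in>M. x j (idx j))\<bar> \<le> \<bar>T idx\<bar>"
    by (simp add: abs_mult mult_left_le)
qed

lemma SS_bdd: "bdd_above SS"
proof (rule bdd_aboveI)
  fix z assume "z \<in> SS"
  then obtain x where "z = Fm M e T x" "unit x" by blast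
  then show "z \<le> (\<Sum>idx\<in>PiE M (\<lambda>j. {..<e j}). \<bar>T idx\<bar>)" using Fm_bound[of x] by simp
qed

lemma unit_exists: "unit (\<lambda>j i. if i = 0 then 1 else 0)"
proof
  fix j assume "j \<in> M"
  then show "lpnorm p (e j) (\<lambda>i. if i = 0 then 1 else 0) = 1" by (intro lpnorm_unit[OF p1] e1)
qed

lemma in_SS: "unit x \<Longrightarrow> Fm M e T x \<in> SS"
  by (intro CollectI exI[of _ x] conjI refl)

lemma SS_ne: "SS \<noteq> {}"
  using in_SS[OF unit_exists] by (intro notI) simp

lemma tp_upper: "unit x \<Longrightarrow> Fm M e T x \<le> tensor_pnorm p M e T"
  unfolding tensor_pnorm_Fm by (rule cSup_upper[OF in_SS SS_bdd])

lemma tp_least: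
  assumes "\<And>x. unit x \<Longrightarrow> Fm M e T x \<le> c" shows "tensor_pnorm p M e T \<le> c"
  unfolding tensor_pnorm_Fm
proof (rule cSup_least[OF SS_ne])
  fix z assume "z \<in> SS"
  then obtain x where "z = Fm M e T x" "unit x" by blast
  then show "z \<le> c" using assms by simp
qed

lemma Fm_scale:
  "Fm M e T (\<lambda>j i. c j * x j i) = (\<Prod>j\<in>M. c j) * Fm M e T x"
  unfolding Fm_def by (simp add: prod.distrib sum_distrib_left algebra_simps)

lemma tp_nonneg:
  assumes "M \<noteq> {}" shows "tensor_pnorm p M e T \<ge> 0"
proof -
  obtain j0 where j0: "j0 \<in> M" using assms by blast
  define x where "x = (\<lambda>(j::'m) (i::nat). if i = 0 then 1 else (0::real))"
  define c where "c = (\<lambda>j. if j = j0 then -1 else (1::real))"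
  have ux: "unit x" unfolding x_def by (rule unit_exists)
  have ux': "unit (\<lambda>j i. c j * x j i)"
    using ux lpnorm_scale[OF p1] by (auto simp: c_def)
  have "(\<Prod>j\<in>M. c j) = -1"
    using j0 finM by (simp add: c_def prod.If_cases Int_absorb1 prod.neutral)
  then have "Fm M e T (\<lambda>j i. c j * x j i) = - Fm M e T x" by (simp add: Fm_scale)
  then show ?thesis using tp_upper[OF ux] tp_upper[OF ux'] by linarith
qed

lemma tp_homog:
  assumes "M \<noteq> {}"
  shows "Fm M e T x \<le> tensor_pnorm p M e T * (\<Prod>j\<in>M. lpnorm p (e j) (x j))"
proof (cases "\<exists>j0\<in>M. lpnorm p (e j0) (x j0) = 0")
  case True
  then obtain j0 where j0: "j0 \<in> M" "lpnorm p (e j0) (x j0) = 0" by blast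
  have "Fm M e T x = 0" unfolding Fm_def
  proof (intro sum.neutral ballI)
    fix idx assume idx: "idx \<in> PiE M (\<lambda>j. {..<e j})"
    have "x j0 (idx j0) = 0" using lpnorm_zeroD[OF p1 _ j0(2)] idx j0(1) by (auto simp: PiE_iff)
    then show "T idx * (\<Prod>j\<in>M. x j (idx j)) = 0" using finM j0(1) by (simp add: prod_zero_iff) blast
  qed
  then show ?thesis using tp_nonneg[OF assms] by (simp add: prod_nonneg lpnorm_nonneg)
next
  case False
  define \<nu> where "\<nu> = (\<lambda>j. lpnorm p (e j) (x j))"
  have \<nu>0: "\<And>j. j \<in> M \<Longrightarrow> \<nu> j > 0" using False lpnorm_nonneg unfolding \<nu>_def
    by (metis less_eq_real_def)
  define x' where "x' = (\<lambda>j i. (1 / \<nu> j) * x j i)"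
  have ux': "unit x'"
  proof
    fix j assume j: "j \<in> M"
    have "lpnorm p (e j) (x' j) = \<bar>1 / \<nu> j\<bar> * \<nu> j"
      unfolding x'_def \<nu>_def by (rule lpnorm_scale[OF p1])
    then show "lpnorm p (e j) (x' j) = 1" using \<nu>0[OF j] by simp
  qed
  have eq: "\<And>j i. j \<in> M \<Longrightarrow> \<nu> j * x' j i = x j i"
    using \<nu>0 unfolding x'_def by (simp add: less_imp_neq[symmetric])
  have "Fm M e T x = Fm M e T (\<lambda>j i. \<nu> j * x' j i)"
    unfolding Fm_def using eq by (intro sum.cong refl arg_cong2[where f="(*)"] prod.cong) simp_all
  also have "\<dots> = (\<Prod>j\<in>M. \<nu> j) * Fm M e T x'" by (rule Fm_scale)
  also have "\<dots> \<le> (\<Prod>j\<in>M. \<nu> j) * tensor_pnorm p M e T"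
    using tp_upper[OF ux'] \<nu>0 by (intro mult_left_mono prod_nonneg) (auto simp: less_imp_le)
  finally show ?thesis by (simp add: \<nu>_def mult.commute)
qed

end

lemma tp_compare:
  assumes finM: "finite M" and ne: "M \<noteq> {}" and e1: "\<And>j. j \<in> M \<Longrightarrow> e j \<ge> 1"
    and p1: "1 \<le> p" and pq: "p \<le> q"
  shows "tensor_pnorm p M e T \<le> tensor_pnorm q M e T"
    and "tensor_pnorm q M e T \<le> real (\<Prod>j\<in>M. e j) powr (inv_exp p - inv_exp q) * tensor_pnorm p M e T"
proof -
  have q1: "1 \<le> q" using p1 pq by simp
  interpret P: tsetup p M e T using finM e1 p1 by unfold_locales
  interpret Q: tsetup q M e T using finM e1 q1 by unfold_locales
  show "tensor_pnorm p M e T \<le> tensor_pnorm q M e T"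
  proof (rule P.tp_least)
    fix x assume ux: "\<forall>j\<in>M. lpnorm p (e j) (x j) = 1"
    have "Fm M e T x \<le> tensor_pnorm q M e T * (\<Prod>j\<in>M. lpnorm q (e j) (x j))"
      by (rule Q.tp_homog[OF ne])
    also have "\<dots> \<le> tensor_pnorm q M e T * 1"
    proof (rule mult_left_mono[OF prod_le_1 Q.tp_nonneg[OF ne]])
      fix j assume "j \<in> M"
      then show "0 \<le> lpnorm q (e j) (x j) \<and> lpnorm q (e j) (x j) \<le> 1"
        using lpnorm_mono_exp[OF p1 pq, of "e j" "x j"] ux lpnorm_nonneg by auto
    qed
    finally show "Fm M e T x \<le> tensor_pnorm q M e T" by simp
  qed
  show "tensor_pnorm q M e T \<le> real (\<Prod>j\<in>M. e j) powr (inv_exp p - inv_exp q) * tensor_pnorm p M e T"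
  proof (rule Q.tp_least)
    fix x assume ux: "\<forall>j\<in>M. lpnorm q (e j) (x j) = 1"
    have "Fm M e T x \<le> tensor_pnorm p M e T * (\<Prod>j\<in>M. lpnorm p (e j) (x j))"
      by (rule P.tp_homog[OF ne])
    also have "\<dots> \<le> tensor_pnorm p M e T * (\<Prod>j\<in>M. real (e j) powr (inv_exp p - inv_exp q))"
    proof (rule mult_left_mono[OF prod_mono P.tp_nonneg[OF ne]])
      fix j assume j: "j \<in> M"
      then show "0 \<le> lpnorm p (e j) (x j) \<and> lpnorm p (e j) (x j) \<le> real (e j) powr (inv_exp p - inv_exp q)"
        using lpnorm_mean[OF p1 pq, of "e j" "x j"] ux lpnorm_nonneg e1 by auto
    qed
    also have "\<dots> = real (\<Prod>j\<in>M. e j) powr (inv_exp p - inv_exp q) * tensor_pnorm p M e T"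
      by (simp add: prod_powr_distrib mult.commute)
    finally show "Fm M e T x \<le> \<dots>" .
  qed
qed




definition J :: "(nat \<Rightarrow> nat) \<Rightarrow> nat set \<Rightarrow> (nat \<Rightarrow> nat) set" where
  "J d X = PiE X (\<lambda>n. {..<d n})"

definition phi :: "(nat \<Rightarrow> nat) \<Rightarrow> nat set \<Rightarrow> nat \<Rightarrow> (nat \<Rightarrow> nat)" where
  "phi d B a = restrict (\<lambda>r. block_digit d B r a) B"

definition psi :: "(nat \<Rightarrow> nat) \<Rightarrow> nat set \<Rightarrow> (nat \<Rightarrow> nat) \<Rightarrow> nat" where
  "psi d B = the_inv_into {..<unfold_dims d B} (phi d B)"

lemma finite_J: "finite X \<Longrightarrow> finite (J d X)"
  unfolding J_def by (intro finite_PiE) auto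

lemma card_J: "finite X \<Longrightarrow> card (J d X) = (\<Prod>n\<in>X. d n)"
  unfolding J_def by (simp add: card_PiE)

lemma digits_inj:
  assumes "finite B"
  shows "\<forall>r\<in>B. d r \<ge> 1 \<Longrightarrow> a < (\<Prod>s\<in>B. d s) \<Longrightarrow> b < (\<Prod>s\<in>B. d s)
    \<Longrightarrow> (\<forall>r\<in>B. block_digit d B r a = block_digit d B r b) \<Longrightarrow> a = b"
  using assms
proof (induction B arbitrary: a b rule: finite_linorder_min_induct)
  case empty then show ?case by simp
next
  case (insert x B)
  have xB: "x \<notin> B" using insert.hyps by auto
  have dx: "d x \<ge> 1" using insert.prems by auto
  have prod: "(\<Prod>s\<in>insert x B. d s) = d x * (\<Prod>s\<in>B. d s)" using insert.hyps xB by simp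
  have dig: "block_digit d (insert x B) r m = block_digit d B r (m div d x)" if r: "r \<in> B" for r m
  proof -
    have "{s \<in> insert x B. s < r} = insert x {s\<in>B. s < r}" using insert.hyps r by auto
    then have "(\<Prod>s\<in>{s \<in> insert x B. s < r}. d s) = d x * (\<Prod>s\<in>{s\<in>B. s<r}. d s)"
      using insert.hyps xB by simp
    then show ?thesis unfolding block_digit_def by (simp add: div_mult2_eq)
  qed
  have dig0: "block_digit d (insert x B) x m = m mod d x" for m
  proof -
    have e: "{s \<in> insert x B. s < x} = {}" using insert.hyps by auto
    have "block_digit d (insert x B) x m = m div (\<Prod>s\<in>{}. d s) mod d x"
      by (simp only: block_digit_def e)
    then show ?thesis by simp
  qed
  have a1: "a div d x < (\<Prod>s\<in>B. d s)" using insert.prems(2) prod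
    by (simp add: less_mult_imp_div_less mult.commute)
  have b1: "b div d x < (\<Prod>s\<in>B. d s)" using insert.prems(3) prod
    by (simp add: less_mult_imp_div_less mult.commute)
  have "a div d x = b div d x"
    using insert.IH[OF _ a1 b1] insert.prems(1,4) dig by auto
  moreover have "a mod d x = b mod d x" using insert.prems(4) dig0 by auto
  ultimately show ?case by (metis div_mult_mod_eq)
qed

lemma phi_bij:
  assumes "finite B" "\<forall>r\<in>B. d r \<ge> 1"
  shows "bij_betw (phi d B) {..<unfold_dims d B} (J d B)"
proof -
  have inj: "inj_on (phi d B) {..<unfold_dims d B}"
  proof (rule inj_onI)
    fix a b assume a: "a \<in> {..<unfold_dims d B}" and b: "b \<in> {..<unfold_dims d B}"
      and eq: "phi d B a = phi d B b"
    have "\<forall>r\<in>B. block_digit d B r a = block_digit d B r b"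
    proof
      fix r assume "r \<in> B"
      then show "block_digit d B r a = block_digit d B r b"
        using fun_cong[OF eq, of r] by (simp add: phi_def)
    qed
    then show "a = b" using digits_inj[OF assms(1) assms(2)] a b by (simp add: unfold_dims_def)
  qed
  have sub: "phi d B ` {..<unfold_dims d B} \<subseteq> J d B"
  proof
    fix z assume "z \<in> phi d B ` {..<unfold_dims d B}"
    then obtain a where z: "z = phi d B a" by blast
    show "z \<in> J d B" unfolding z J_def phi_def block_digit_def
      using assms(2) by (auto intro!: mod_less_divisor)
  qed
  have "card (phi d B ` {..<unfold_dims d B}) = card (J d B)"
    using card_image[OF inj] card_J[OF assms(1)] by (simp add: unfold_dims_def)
  then have "phi d B ` {..<unfold_dims d B} = J d B"
    using card_subset_eq[OF finite_J[OF assms(1)] sub] by simp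
  then show ?thesis using inj by (simp add: bij_betw_def)
qed

lemma psi_phi:
  assumes "finite B" "\<forall>r\<in>B. d r \<ge> 1" "a < unfold_dims d B"
  shows "psi d B (phi d B a) = a"
  unfolding psi_def using phi_bij[OF assms(1,2)] assms(3)
  by (simp add: bij_betw_def the_inv_into_f_f)

lemma phi_psi:
  assumes "finite B" "\<forall>r\<in>B. d r \<ge> 1" "j \<in> J d B"
  shows "phi d B (psi d B j) = j"
  unfolding psi_def using phi_bij[OF assms(1,2)] assms(3)
  by (simp add: bij_betw_def f_the_inv_into_f)

lemma psi_in:
  assumes "finite B" "\<forall>r\<in>B. d r \<ge> 1" "j \<in> J d B"
  shows "psi d B j < unfold_dims d B"
proof -
  have "psi d B j \<in> {..<unfold_dims d B}"
    unfolding psi_def using phi_bij[OF assms(1,2)] assms(3)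
    by (intro the_inv_into_into) (auto simp: bij_betw_def)
  then show ?thesis by simp
qed

lemma lp2: "lpnorm 2 n v = sqrt (\<Sum>i<n. (v i)^2)"
proof -
  have "\<And>i. \<bar>v i\<bar> powr 2 = (v i)^2"
    by (subst powr_numeral) auto
  then show ?thesis unfolding lpnorm_def by (simp add: powr_half_sqrt sum_nonneg)
qed

locale psetup =
  fixes k :: nat and d :: "nat \<Rightarrow> nat" and \<pi> :: "nat set set"
  assumes d1: "\<forall>n\<in>{1..k}. d n \<ge> 1" and part: "partition_on {1..k} \<pi>"
begin

lemma fin_pi: "finite \<pi>"
  by (rule finite_UnionD) (simp add: partition_onD1[OF part, symmetric])

lemma blk_sub: "B \<in> \<pi> \<Longrightarrow> B \<subseteq> {1..k}"
  using partition_onD1[OF part] by auto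

lemma blk_fin: "B \<in> \<pi> \<Longrightarrow> finite B"
  using blk_sub finite_subset by blast

lemma blk_d1: "B \<in> \<pi> \<Longrightarrow> \<forall>r\<in>B. d r \<ge> 1"
  using blk_sub d1 by blast

lemma blk_unique: "B \<in> \<pi> \<Longrightarrow> B' \<in> \<pi> \<Longrightarrow> r \<in> B \<Longrightarrow> r \<in> B' \<Longrightarrow> B = B'"
proof (rule ccontr)
  assume h: "B \<in> \<pi>" "B' \<in> \<pi>" "r \<in> B" "r \<in> B'" "B \<noteq> B'"
  then have "B \<inter> B' = {}" using disjointD[OF partition_onD2[OF part]] by blast
  then show False using h by blast
qed

lemma the_blk: "B \<in> \<pi> \<Longrightarrow> r \<in> B \<Longrightarrow> (THE B'. B' \<in> \<pi> \<and> r \<in> B') = B"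
proof (rule the_equality)
  fix B' assume "B \<in> \<pi>" "r \<in> B" "B' \<in> \<pi> \<and> r \<in> B'"
  then show "B' = B" using blk_unique by blast
qed simp

lemma ex_blk: "r \<in> {1..k} \<Longrightarrow> \<exists>B\<in>\<pi>. r \<in> B"
  using partition_onD1[OF part] by auto

lemma dims1: "B \<in> \<pi> \<Longrightarrow> unfold_dims d B \<ge> 1"
  unfolding unfold_dims_def using blk_d1 by (intro prod_ge_1) auto

definition Phi :: "(nat set \<Rightarrow> nat) \<Rightarrow> (nat \<Rightarrow> nat)" where
  "Phi m = (\<lambda>r. if r \<in> {1..k} then (let B = (THE B. B \<in> \<pi> \<and> r \<in> B) in block_digit d B r (m B)) else undefined)"

lemma unfold_Phi: "unfold k d \<pi> A m = A (Phi m)"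
  by (simp add: unfold_def Phi_def)

lemma restrict_Phi: "B \<in> \<pi> \<Longrightarrow> restrict (Phi m) B = phi d B (m B)"
  unfolding phi_def
proof (intro restrict_ext)
  fix r assume B: "B \<in> \<pi>" and r: "r \<in> B"
  have "r \<in> {1..k}" using blk_sub[OF B] r by blast
  then show "Phi m r = block_digit d B r (m B)" by (simp add: Phi_def the_blk[OF B r])
qed

lemma Phi_bij: "bij_betw Phi (PiE \<pi> (\<lambda>B. {..<unfold_dims d B})) (J d {1..k})"
proof -
  let ?M = "PiE \<pi> (\<lambda>B. {..<unfold_dims d B})"
  have inj: "inj_on Phi ?M"
  proof (rule inj_onI)
    fix m m' assume m: "m \<in> ?M" and m': "m' \<in> ?M" and eq: "Phi m = Phi m'"
    show "m = m'"
    proof (rule PiE_ext[OF m m'])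
      fix B assume B: "B \<in> \<pi>"
      have "phi d B (m B) = phi d B (m' B)" using restrict_Phi[OF B, of m] restrict_Phi[OF B, of m'] eq by simp
      then have "psi d B (phi d B (m B)) = psi d B (phi d B (m' B))" by simp
      then show "m B = m' B" using psi_phi[OF blk_fin[OF B] blk_d1[OF B]] m m' B
        by (simp add: PiE_iff)
    qed
  qed
  have sub: "Phi ` ?M \<subseteq> J d {1..k}"
  proof
    fix z assume "z \<in> Phi ` ?M"
    then obtain m where m: "m \<in> ?M" and z: "z = Phi m" by blast
    show "z \<in> J d {1..k}" unfolding J_def PiE_iff
    proof (intro conjI ballI)
      fix r assume r: "r \<in> {1..k}"
      obtain B where B: "B \<in> \<pi>" "r \<in> B" using ex_blk[OF r] by blast
      have "z r = phi d B (m B) r" using fun_cong[OF restrict_Phi[OF B(1), of m], of r] B(2) z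
        by simp
      moreover have "phi d B (m B) \<in> J d B"
        using bij_betwE[OF phi_bij[OF blk_fin[OF B(1)] blk_d1[OF B(1)]]] PiE_mem[OF m B(1)] by blast
      ultimately have "z r \<in> (\<lambda>n. {..<d n}) r" unfolding J_def using PiE_mem B(2) by metis
      then show "z r \<in> {..<d r}" by simp
    next
      show "z \<in> extensional {1..k}" unfolding z by (simp add: extensional_def Phi_def)
    qed
  qed
  have sup: "J d {1..k} \<subseteq> Phi ` ?M"
  proof
    fix i assume i: "i \<in> J d {1..k}"
    define m where "m = (\<lambda>B\<in>\<pi>. psi d B (restrict i B))"
    have riJ: "restrict i B \<in> J d B" if "B \<in> \<pi>" for B
      using i blk_sub[OF that] by (auto simp: J_def PiE_iff)
    have "m \<in> ?M"
    proof (rule PiE_I)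
      fix B assume B: "B \<in> \<pi>"
      show "m B \<in> {..<unfold_dims d B}" unfolding m_def
        using psi_in[OF blk_fin[OF B] blk_d1[OF B] riJ[OF B]] B by simp
    next
      fix B assume B: "B \<notin> \<pi>"
      show "m B = undefined" unfolding m_def using B by simp
    qed
    moreover have "Phi m = i"
    proof
      fix r show "Phi m r = i r"
      proof (cases "r \<in> {1..k}")
        case True
        obtain B where B: "B \<in> \<pi>" "r \<in> B" using ex_blk[OF True] by blast
        have "Phi m r = phi d B (m B) r" using fun_cong[OF restrict_Phi[OF B(1), of m], of r] B(2)
          by simp
        also have "\<dots> = restrict i B r" unfolding m_def
          using phi_psi[OF blk_fin[OF B(1)] blk_d1[OF B(1)] riJ[OF B(1)]] B(1) by simp
        finally show ?thesis using B(2) by simp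
      next
        case False
        have "i r = undefined" using i False unfolding J_def by (rule PiE_arb)
        moreover have "Phi m r = undefined" unfolding Phi_def using False by (rule if_not_P)
        ultimately show ?thesis by simp
      qed
    qed
    ultimately show "i \<in> Phi ` ?M" by blast
  qed
  have "Phi ` ?M = J d {1..k}" using sub sup by (rule subset_antisym)
  then show ?thesis using inj unfolding bij_betw_def by (rule conjI[rotated])
qed

definition G :: "((nat \<Rightarrow> nat) \<Rightarrow> real) \<Rightarrow> (nat set \<Rightarrow> (nat \<Rightarrow> nat) \<Rightarrow> real) \<Rightarrow> real" where
  "G A y = (\<Sum>i\<in>J d {1..k}. A i * (\<Prod>B\<in>\<pi>. y B (restrict i B)))"

lemma F_eq_G: "Fm \<pi> (unfold_dims d) (unfold k d \<pi> A) x = G A (\<lambda>B j. x B (psi d B j))"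
  unfolding Fm_def G_def
proof (subst sum.reindex_bij_betw[OF Phi_bij, symmetric], intro sum.cong refl)
  fix m assume m: "m \<in> PiE \<pi> (\<lambda>B. {..<unfold_dims d B})"
  have "(\<Prod>B\<in>\<pi>. x B (psi d B (restrict (Phi m) B))) = (\<Prod>B\<in>\<pi>. x B (m B))"
  proof (intro prod.cong refl)
    fix B assume B: "B \<in> \<pi>"
    show "x B (psi d B (restrict (Phi m) B)) = x B (m B)"
      using restrict_Phi[OF B] psi_phi[OF blk_fin[OF B] blk_d1[OF B]] m B by (simp add: PiE_iff)
  qed
  then show "unfold k d \<pi> A m * (\<Prod>B\<in>\<pi>. x B (m B)) = A (Phi m) * (\<Prod>B\<in>\<pi>. x B (psi d B (restrict (Phi m) B)))"
    by (simp add: unfold_Phi)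
qed

lemma G_cong: "(\<And>B j. B \<in> \<pi> \<Longrightarrow> j \<in> J d B \<Longrightarrow> y B j = y' B j) \<Longrightarrow> G A y = G A y'"
  unfolding G_def
proof (intro sum.cong refl arg_cong2[where f="(*)"] prod.cong)
  fix i B assume h: "\<And>B j. B \<in> \<pi> \<Longrightarrow> j \<in> J d B \<Longrightarrow> y B j = y' B j" and i: "i \<in> J d {1..k}" and B: "B \<in> \<pi>"
  have "restrict i B \<in> J d B" using i blk_sub[OF B] by (auto simp: J_def PiE_iff)
  then show "y B (restrict i B) = y' B (restrict i B)" using h B by simp
qed

lemma G_eq_F: "Fm \<pi> (unfold_dims d) (unfold k d \<pi> A) (\<lambda>B a. w B (phi d B a)) = G A w"
  unfolding F_eq_G using phi_psi[OF blk_fin blk_d1] by (intro G_cong) simp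

lemma lp2_phi: "B \<in> \<pi> \<Longrightarrow> lpnorm 2 (unfold_dims d B) (\<lambda>a. w B (phi d B a)) = sqrt (\<Sum>j\<in>J d B. (w B j)^2)"
  unfolding lp2 using sum.reindex_bij_betw[OF phi_bij[OF blk_fin blk_d1], of B "\<lambda>j. (w B j)^2"]
  by (simp add: lessThan_def)

lemma lp2_psi: "B \<in> \<pi> \<Longrightarrow> lpnorm 2 (unfold_dims d B) (x B) = sqrt (\<Sum>j\<in>J d B. (x B (psi d B j))^2)"
proof -
  assume B: "B \<in> \<pi>"
  have "(\<Sum>j\<in>J d B. (x B (psi d B j))^2) = (\<Sum>a\<in>{..<unfold_dims d B}. (x B (psi d B (phi d B a)))^2)"
    using sum.reindex_bij_betw[OF phi_bij[OF blk_fin[OF B] blk_d1[OF B]], of "\<lambda>j. (x B (psi d B j))^2"]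
    by simp
  also have "\<dots> = (\<Sum>a<unfold_dims d B. (x B a)^2)"
    using psi_phi[OF blk_fin[OF B] blk_d1[OF B]] by simp
  finally show ?thesis unfolding lp2 by simp
qed

abbreviation "N2 A \<equiv> tensor_pnorm 2 \<pi> (unfold_dims d) (unfold k d \<pi> A)"

lemma tsetup2: "tsetup 2 \<pi> (unfold_dims d)"
  using fin_pi dims1 by unfold_locales auto

lemma G_le:
  assumes "\<pi> \<noteq> {}"
  shows "G A w \<le> N2 A * (\<Prod>B\<in>\<pi>. sqrt (\<Sum>j\<in>J d B. (w B j)^2))"
proof -
  have "G A w = Fm \<pi> (unfold_dims d) (unfold k d \<pi> A) (\<lambda>B a. w B (phi d B a))"
    by (rule G_eq_F[symmetric])
  also have "\<dots> \<le> N2 A * (\<Prod>B\<in>\<pi>. lpnorm 2 (unfold_dims d B) (\<lambda>a. w B (phi d B a)))"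
    by (rule tsetup.tp_homog[OF tsetup2 assms])
  also have "(\<Prod>B\<in>\<pi>. lpnorm 2 (unfold_dims d B) (\<lambda>a. w B (phi d B a))) = (\<Prod>B\<in>\<pi>. sqrt (\<Sum>j\<in>J d B. (w B j)^2))"
    using lp2_phi by (intro prod.cong) auto
  finally show ?thesis .
qed

lemma N2_le:
  assumes "\<And>y. (\<forall>B\<in>\<pi>. (\<Sum>j\<in>J d B. (y B j)^2) = 1) \<Longrightarrow> G A y \<le> c"
  shows "N2 A \<le> c"
proof (rule tsetup.tp_least[OF tsetup2])
  fix x assume ux: "\<forall>B\<in>\<pi>. lpnorm 2 (unfold_dims d B) (x B) = 1"
  have "\<forall>B\<in>\<pi>. (\<Sum>j\<in>J d B. (x B (psi d B j))^2) = 1"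
  proof
    fix B assume B: "B \<in> \<pi>"
    have "lpnorm 2 (unfold_dims d B) (x B) = 1" using ux B by blast
    then have "sqrt (\<Sum>j\<in>J d B. (x B (psi d B j))^2) = 1" using lp2_psi[OF B, of x] by simp
    then show "(\<Sum>j\<in>J d B. (x B (psi d B j))^2) = 1" by simp
  qed
  then show "Fm \<pi> (unfold_dims d) (unfold k d \<pi> A) x \<le> c"
    unfolding F_eq_G by (rule assms)
qed

end




lemma sqrt_prod: "finite S \<Longrightarrow> sqrt (\<Prod>i\<in>S. f i) = (\<Prod>i\<in>S. sqrt (f i))"
  by (induction S rule: finite_induct) (auto simp: real_sqrt_mult)

lemma restrict_mem_J: "j \<in> J d Y \<Longrightarrow> X \<subseteq> Y \<Longrightarrow> restrict j X \<in> J d X"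
  unfolding J_def by (auto simp: PiE_iff)

lemma PF0:
  assumes fX: "finite X" and fY: "finite Y" and dis: "X \<inter> Y = {}"
  shows "(\<Sum>j\<in>J d (X \<union> Y). h j) = (\<Sum>a\<in>J d X. \<Sum>b\<in>J d Y. h (restrict (\<lambda>n. if n \<in> X then a n else b n) (X \<union> Y)))"
proof -
  have "(\<Sum>a\<in>J d X. \<Sum>b\<in>J d Y. h (restrict (\<lambda>n. if n \<in> X then a n else b n) (X \<union> Y)))
      = (\<Sum>(a,b)\<in>J d X \<times> J d Y. h (restrict (\<lambda>n. if n \<in> X then a n else b n) (X \<union> Y)))"
    by (rule sum.cartesian_product)
  also have "\<dots> = (\<Sum>j\<in>J d (X \<union> Y). h j)"
  proof (rule sum.reindex_bij_witness[where i="\<lambda>j. (restrict j X, restrict j Y)"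
        and j="\<lambda>(a,b). restrict (\<lambda>n. if n \<in> X then a n else b n) (X \<union> Y)"])
    fix ab assume ab: "ab \<in> J d X \<times> J d Y"
    obtain a b where ab': "ab = (a, b)" "a \<in> J d X" "b \<in> J d Y" using ab by auto
    have "restrict (restrict (\<lambda>n. if n \<in> X then a n else b n) (X \<union> Y)) X = a"
      using ab'(2) unfolding J_def by (auto simp: PiE_iff extensional_def)
    moreover have "restrict (restrict (\<lambda>n. if n \<in> X then a n else b n) (X \<union> Y)) Y = b"
    proof (rule ext)
      fix n show "restrict (restrict (\<lambda>n. if n \<in> X then a n else b n) (X \<union> Y)) Y n = b n"
        using ab'(3) dis unfolding J_def by (cases "n \<in> Y") (auto simp: PiE_iff extensional_def)
    qed
    ultimately show "(\<lambda>j. (restrict j X, restrict j Y)) ((\<lambda>(a,b). restrict (\<lambda>n. if n \<in> X then a n else b n) (X \<union> Y)) ab) = ab"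
      using ab'(1) by simp
    show "(\<lambda>(a,b). restrict (\<lambda>n. if n \<in> X then a n else b n) (X \<union> Y)) ab \<in> J d (X \<union> Y)"
      using ab' unfolding J_def by (auto simp: PiE_iff)
  next
    fix j assume j: "j \<in> J d (X \<union> Y)"
    show "(\<lambda>(a,b). restrict (\<lambda>n. if n \<in> X then a n else b n) (X \<union> Y)) ((\<lambda>j. (restrict j X, restrict j Y)) j) = j"
      using j unfolding J_def by (auto simp: PiE_iff extensional_def)
    show "(\<lambda>j. (restrict j X, restrict j Y)) j \<in> J d X \<times> J d Y"
      using j restrict_mem_J by auto
  qed (simp add: case_prod_unfold)
  finally show ?thesis by simp
qed

lemma PF:
  fixes g :: "'k \<Rightarrow> (nat \<Rightarrow> nat) \<Rightarrow> real"
  assumes "finite K" "\<forall>\<kappa>\<in>K. finite (X \<kappa>)" "\<forall>\<kappa>\<in>K. \<forall>\<kappa>'\<in>K. \<kappa> \<noteq> \<kappa>' \<longrightarrow> X \<kappa> \<inter> X \<kappa>' = {}"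
  shows "(\<Sum>j\<in>J d (\<Union>\<kappa>\<in>K. X \<kappa>). \<Prod>\<kappa>\<in>K. g \<kappa> (restrict j (X \<kappa>)))
       = (\<Prod>\<kappa>\<in>K. \<Sum>a\<in>J d (X \<kappa>). g \<kappa> a)"
  using assms
proof (induction K rule: finite_induct)
  case empty then show ?case by (simp add: J_def)
next
  case (insert \<kappa> K)
  let ?U = "\<Union>\<kappa>'\<in>K. X \<kappa>'"
  have fX: "finite (X \<kappa>)" and fU: "finite ?U" using insert by auto
  have dis: "X \<kappa> \<inter> ?U = {}" using insert.prems(2) insert.hyps(2) by fastforce
  have "(\<Sum>j\<in>J d (X \<kappa> \<union> ?U). \<Prod>\<kappa>'\<in>insert \<kappa> K. g \<kappa>' (restrict j (X \<kappa>')))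
     = (\<Sum>a\<in>J d (X \<kappa>). \<Sum>b\<in>J d ?U. \<Prod>\<kappa>'\<in>insert \<kappa> K. g \<kappa>' (restrict (restrict (\<lambda>n. if n \<in> X \<kappa> then a n else b n) (X \<kappa> \<union> ?U)) (X \<kappa>')))"
    by (rule PF0[OF fX fU dis])
  also have "\<dots> = (\<Sum>a\<in>J d (X \<kappa>). \<Sum>b\<in>J d ?U. g \<kappa> a * (\<Prod>\<kappa>'\<in>K. g \<kappa>' (restrict b (X \<kappa>'))))"
  proof (intro sum.cong refl)
    fix a b assume a: "a \<in> J d (X \<kappa>)" and b: "b \<in> J d ?U"
    have r1: "restrict (restrict (\<lambda>n. if n \<in> X \<kappa> then a n else b n) (X \<kappa> \<union> ?U)) (X \<kappa>) = a"
      using a unfolding J_def by (auto simp: PiE_iff extensional_def)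
    have r2: "restrict (restrict (\<lambda>n. if n \<in> X \<kappa> then a n else b n) (X \<kappa> \<union> ?U)) (X \<kappa>') = restrict b (X \<kappa>')"
      if "\<kappa>' \<in> K" for \<kappa>'
      using that dis by (intro restrict_ext) auto
    show "(\<Prod>\<kappa>'\<in>insert \<kappa> K. g \<kappa>' (restrict (restrict (\<lambda>n. if n \<in> X \<kappa> then a n else b n) (X \<kappa> \<union> ?U)) (X \<kappa>')))
        = g \<kappa> a * (\<Prod>\<kappa>'\<in>K. g \<kappa>' (restrict b (X \<kappa>')))"
      using insert.hyps r1 r2 by simp
  qed
  also have "\<dots> = (\<Sum>a\<in>J d (X \<kappa>). g \<kappa> a) * (\<Sum>b\<in>J d ?U. \<Prod>\<kappa>'\<in>K. g \<kappa>' (restrict b (X \<kappa>')))"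
    by (rule sum_product[symmetric])
  also have "(\<Sum>b\<in>J d ?U. \<Prod>\<kappa>'\<in>K. g \<kappa>' (restrict b (X \<kappa>'))) = (\<Prod>\<kappa>'\<in>K. \<Sum>a\<in>J d (X \<kappa>'). g \<kappa>' a)"
    using insert by (intro insert.IH) auto
  finally show ?case using insert.hyps by simp
qed




locale ppair = P: psetup k d \<pi> + S: psetup k d \<sigma> for k d \<pi> \<sigma>
begin

definition Dm :: "nat set \<Rightarrow> real" where "Dm B = Max ((\<lambda>B'. Dblk d B B') ` \<sigma>)"
definition beta :: "nat set \<Rightarrow> nat set" where "beta B = (SOME B'. B' \<in> \<sigma> \<and> Dblk d B B' = Dm B)"
definition Cb where "Cb B = B \<inter> beta B"
definition Rb where "Rb B = B - beta B"
definition Rall where "Rall = (\<Union>B\<in>\<pi>. Rb B)"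
definition Q where "Q = (\<Prod>B\<in>\<pi>. \<Prod>n\<in>Rb B. real (d n))"

lemma blk_ne: "B \<in> \<pi> \<Longrightarrow> \<exists>r. r \<in> B"
  using partition_onD3[OF P.part] by (metis all_not_in_conv)

lemma sigma_ne: "B \<in> \<pi> \<Longrightarrow> \<sigma> \<noteq> {}"
proof -
  assume B: "B \<in> \<pi>"
  obtain r where r: "r \<in> B" using blk_ne[OF B] by blast
  have "r \<in> {1..k}" using P.blk_sub[OF B] r by blast
  then show "\<sigma> \<noteq> {}" using S.ex_blk by blast
qed

lemma beta: assumes "B \<in> \<pi>" shows "beta B \<in> \<sigma>" "Dblk d B (beta B) = Dm B"
proof -
  have "Dm B \<in> (\<lambda>B'. Dblk d B B') ` \<sigma>" unfolding Dm_def using S.fin_pi sigma_ne[OF assms]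
    by (intro Max_in) auto
  then have "\<exists>B'. B' \<in> \<sigma> \<and> Dblk d B B' = Dm B" by auto
  then have "beta B \<in> \<sigma> \<and> Dblk d B (beta B) = Dm B" unfolding beta_def by (rule someI_ex)
  then show "beta B \<in> \<sigma>" "Dblk d B (beta B) = Dm B" by auto
qed

lemma Cb_ne: assumes B: "B \<in> \<pi>" shows "Cb B \<noteq> {}"
proof
  assume e: "Cb B = {}"
  obtain r where r: "r \<in> B" using blk_ne[OF B] by blast
  have rk: "r \<in> {1..k}" using P.blk_sub[OF B] r by blast
  then obtain B'' where B'': "B'' \<in> \<sigma>" "r \<in> B''" using S.ex_blk by blast
  have "Dblk d B B'' = (\<Prod>n\<in>B \<inter> B''. real (d n))" using r B'' by (auto simp: Dblk_def)
  also have "\<dots> \<ge> 1" using P.blk_sub[OF B] P.d1 by (intro prod_ge_1) auto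
  finally have "Dblk d B B'' \<ge> 1" .
  moreover have "Dblk d B B'' \<le> Dm B" unfolding Dm_def using S.fin_pi B'' by (intro Max_ge) auto
  moreover have "Dm B = 0" using beta(2)[OF B] e by (simp add: Dblk_def Cb_def)
  ultimately show False by simp
qed

lemma Dm_eq: "B \<in> \<pi> \<Longrightarrow> Dm B = (\<Prod>n\<in>Cb B. real (d n))"
  using beta(2) Cb_ne by (simp add: Dblk_def Cb_def)

lemma Cb_Rb: "B = Cb B \<union> Rb B" "Cb B \<inter> Rb B = {}"
  unfolding Cb_def Rb_def by auto

lemma fin_Cb: "B \<in> \<pi> \<Longrightarrow> finite (Cb B)" and fin_Rb: "B \<in> \<pi> \<Longrightarrow> finite (Rb B)"
  using P.blk_fin unfolding Cb_def Rb_def by auto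

lemma Rall_sub: "Rall \<subseteq> {1..k}"
  unfolding Rall_def Rb_def using P.blk_sub by auto

lemma fin_Rall: "finite Rall"
  using Rall_sub finite_subset by blast

lemma m1: "B \<in> \<pi> \<Longrightarrow> B' \<in> \<sigma> \<Longrightarrow> n \<in> B' \<Longrightarrow> n \<in> B \<Longrightarrow> beta B \<noteq> B' \<Longrightarrow> n \<in> Rb B"
  unfolding Rb_def using S.blk_unique beta(1) by blast

lemma m3: "B \<in> \<pi> \<Longrightarrow> n \<in> B \<Longrightarrow> n \<notin> beta B \<Longrightarrow> n \<in> Rall"
  unfolding Rall_def Rb_def by blast

lemma Rb_disj: "B1 \<in> \<pi> \<Longrightarrow> B2 \<in> \<pi> \<Longrightarrow> B1 \<noteq> B2 \<Longrightarrow> Rb B1 \<inter> Rb B2 = {}"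
  unfolding Rb_def using P.blk_unique by blast

lemma tdim_split: "tdim k d = dim_pair d \<pi> \<sigma> * Q"
proof -
  have "tdim k d = (\<Prod>n\<in>\<Union>\<pi>. real (d n))" by (simp add: tdim_def partition_onD1[OF P.part, symmetric])
  also have "\<dots> = (\<Prod>B\<in>\<pi>. \<Prod>n\<in>B. real (d n))"
    using P.blk_fin P.blk_unique by (subst prod.Union_disjoint) auto
  also have "\<dots> = (\<Prod>B\<in>\<pi>. (\<Prod>n\<in>Cb B. real (d n)) * (\<Prod>n\<in>Rb B. real (d n)))"
  proof (intro prod.cong refl)
    fix B assume B: "B \<in> \<pi>"
    have "(\<Prod>n\<in>B. real (d n)) = (\<Prod>n\<in>Cb B \<union> Rb B. real (d n))" using Cb_Rb(1)[of B] by simp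
    also have "\<dots> = (\<Prod>n\<in>Cb B. real (d n)) * (\<Prod>n\<in>Rb B. real (d n))"
      using fin_Cb[OF B] fin_Rb[OF B] Cb_Rb(2) by (rule prod.union_disjoint)
    finally show "(\<Prod>n\<in>B. real (d n)) = (\<Prod>n\<in>Cb B. real (d n)) * (\<Prod>n\<in>Rb B. real (d n))" .
  qed
  also have "\<dots> = (\<Prod>B\<in>\<pi>. Dm B) * Q" unfolding Q_def by (simp add: prod.distrib Dm_eq)
  finally show ?thesis by (simp add: dim_pair_def Dm_def)
qed


lemma stepA:
  fixes y :: "nat set \<Rightarrow> (nat \<Rightarrow> nat) \<Rightarrow> real" and r :: "nat \<Rightarrow> nat" and i :: "nat \<Rightarrow> nat"
  defines "f \<equiv> \<lambda>B' B a. (if beta B = B' then y B (restrict (\<lambda>n. if n \<in> B' then a n else r n) B)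
                   else (if (\<forall>n\<in>B' \<inter> B. a n = r n) then 1 else (0::real)))"
  assumes r: "r \<in> J d Rall" and i: "i \<in> J d {1..k}"
  shows "(\<Prod>B'\<in>\<sigma>. \<Prod>B\<in>\<pi>. f B' B (restrict (restrict i B') (B' \<inter> B)))
       = (if restrict i Rall = r then (\<Prod>B\<in>\<pi>. y B (restrict i B)) else 0)"
proof -
  have "(\<Prod>B'\<in>\<sigma>. \<Prod>B\<in>\<pi>. f B' B (restrict (restrict i B') (B' \<inter> B)))
      = (\<Prod>B\<in>\<pi>. \<Prod>B'\<in>\<sigma>. f B' B (restrict i (B' \<inter> B)))"
    by (subst prod.swap) (simp add: Int_assoc)
  also have "\<dots> = (if restrict i Rall = r then (\<Prod>B\<in>\<pi>. y B (restrict i B)) else 0)"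
  proof (cases "restrict i Rall = r")
    case True
    have ri: "n \<in> Rall \<Longrightarrow> r n = i n" for n using fun_cong[OF True, of n] by simp
    have "(\<Prod>B'\<in>\<sigma>. f B' B (restrict i (B' \<inter> B))) = y B (restrict i B)" if B: "B \<in> \<pi>" for B
    proof -
      have "(\<Prod>B'\<in>\<sigma>. f B' B (restrict i (B' \<inter> B)))
          = f (beta B) B (restrict i (beta B \<inter> B)) * (\<Prod>B'\<in>\<sigma> - {beta B}. f B' B (restrict i (B' \<inter> B)))"
        using S.fin_pi beta(1)[OF B] by (rule prod.remove)
      also have "(\<Prod>B'\<in>\<sigma> - {beta B}. f B' B (restrict i (B' \<inter> B))) = 1"
      proof (rule prod.neutral, rule ballI)
        fix B' assume B': "B' \<in> \<sigma> - {beta B}"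
        have "\<forall>n\<in>B' \<inter> B. restrict i (B' \<inter> B) n = r n"
        proof
          fix n assume n: "n \<in> B' \<inter> B"
          then have "n \<in> Rb B" using m1[OF B, of B' n] B' by auto
          then have "n \<in> Rall" unfolding Rall_def using B by blast
          then show "restrict i (B' \<inter> B) n = r n" using ri n by simp
        qed
        then show "f B' B (restrict i (B' \<inter> B)) = 1" using B' unfolding f_def by auto
      qed
      also have "f (beta B) B (restrict i (beta B \<inter> B)) = y B (restrict i B)"
      proof -
        have "restrict (\<lambda>n. if n \<in> beta B then restrict i (beta B \<inter> B) n else r n) B = restrict i B"
        proof (rule restrict_ext)
          fix n assume n: "n \<in> B"
          show "(if n \<in> beta B then restrict i (beta B \<inter> B) n else r n) = i n"
            using n ri m3[OF B n] by auto
        qed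
        then show ?thesis unfolding f_def by simp
      qed
      finally show ?thesis by (simp only: mult_1_right)
    qed
    then show ?thesis using True by simp
  next
    case False
    have "\<exists>n\<in>Rall. i n \<noteq> r n"
    proof (rule ccontr)
      assume "\<not> (\<exists>n\<in>Rall. i n \<noteq> r n)"
      then have "restrict i Rall = r" using r unfolding J_def
        by (intro ext) (auto simp: PiE_iff extensional_def)
      then show False using False by simp
    qed
    then obtain n where n: "n \<in> Rall" "i n \<noteq> r n" by blast
    obtain B0 where B0: "B0 \<in> \<pi>" "n \<in> Rb B0" using n(1) unfolding Rall_def by blast
    have "n \<in> {1..k}" using n(1) Rall_sub by blast
    then obtain B' where B': "B' \<in> \<sigma>" "n \<in> B'" using S.ex_blk by blast
    have nb: "n \<notin> beta B0" "n \<in> B0" using B0(2) unfolding Rb_def by auto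
    have "beta B0 \<noteq> B'" using nb B' by auto
    then have z: "f B' B0 (restrict i (B' \<inter> B0)) = 0" unfolding f_def using n(2) B'(2) nb(2) by auto
    have z2: "(\<Prod>B''\<in>\<sigma>. f B'' B0 (restrict i (B'' \<inter> B0))) = 0"
      by (intro prod_zero bexI[where x=B']) (simp_all add: S.fin_pi B'(1) z)
    have "(\<Prod>B\<in>\<pi>. \<Prod>B'\<in>\<sigma>. f B' B (restrict i (B' \<inter> B))) = 0"
      by (rule prod_zero[OF P.fin_pi], rule bexI[where x=B0]) (simp_all add: B0(1) z2)
    then show ?thesis using False by simp
  qed
  finally show ?thesis .
qed


lemma stepC:
  fixes y :: "nat set \<Rightarrow> (nat \<Rightarrow> nat) \<Rightarrow> real" and r :: "nat \<Rightarrow> nat"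
  defines "f \<equiv> \<lambda>B' B a. (if beta B = B' then y B (restrict (\<lambda>n. if n \<in> B' then a n else r n) B)
                   else (if (\<forall>n\<in>B' \<inter> B. a n = r n) then 1 else (0::real)))"
  assumes r: "r \<in> J d Rall" and B': "B' \<in> \<sigma>"
  shows "(\<Sum>j\<in>J d B'. (\<Prod>B\<in>\<pi>. f B' B (restrict j (B' \<inter> B)))^2)
       = (\<Prod>B\<in>{B\<in>\<pi>. beta B = B'}. \<Sum>a\<in>J d (Cb B). (y B (restrict (\<lambda>n. if n \<in> beta B then a n else r n) B))^2)"
proof -
  have U: "(\<Union>B\<in>\<pi>. B' \<inter> B) = B'" using S.blk_sub[OF B'] partition_onD1[OF P.part] by auto
  have "(\<Sum>j\<in>J d B'. (\<Prod>B\<in>\<pi>. f B' B (restrict j (B' \<inter> B)))^2)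
      = (\<Sum>j\<in>J d (\<Union>B\<in>\<pi>. B' \<inter> B). \<Prod>B\<in>\<pi>. (f B' B (restrict j (B' \<inter> B)))^2)"
    unfolding U by (simp add: prod_power_distrib)
  also have "\<dots> = (\<Prod>B\<in>\<pi>. \<Sum>a\<in>J d (B' \<inter> B). (f B' B a)^2)"
  proof (rule PF[OF P.fin_pi])
    show "\<forall>B\<in>\<pi>. finite (B' \<inter> B)" using P.blk_fin by blast
    show "\<forall>B1\<in>\<pi>. \<forall>B2\<in>\<pi>. B1 \<noteq> B2 \<longrightarrow> (B' \<inter> B1) \<inter> (B' \<inter> B2) = {}"
      using P.blk_unique by blast
  qed
  also have "\<dots> = (\<Prod>B\<in>\<pi>. if beta B = B' then (\<Sum>a\<in>J d (Cb B). (y B (restrict (\<lambda>n. if n \<in> beta B then a n else r n) B))^2) else 1)"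
  proof (intro prod.cong refl)
    fix B assume B: "B \<in> \<pi>"
    show "(\<Sum>a\<in>J d (B' \<inter> B). (f B' B a)^2) = (if beta B = B' then (\<Sum>a\<in>J d (Cb B). (y B (restrict (\<lambda>n. if n \<in> beta B then a n else r n) B))^2) else 1)"
    proof (cases "beta B = B'")
      case True
      have "Cb B = B' \<inter> B" unfolding Cb_def using True by auto
      then show ?thesis using True unfolding f_def by simp
    next
      case False
      have sub: "B' \<inter> B \<subseteq> Rall"
      proof
        fix n assume "n \<in> B' \<inter> B"
        then have "n \<in> Rb B" using m1[OF B B', of n] False by auto
        then show "n \<in> Rall" unfolding Rall_def using B by blast
      qed
      have a0: "restrict r (B' \<inter> B) \<in> J d (B' \<inter> B)" using restrict_mem_J[OF r sub] .
      have "(\<Sum>a\<in>J d (B' \<inter> B). (f B' B a)^2) = (\<Sum>a\<in>J d (B' \<inter> B). if a = restrict r (B' \<inter> B) then 1 else 0)"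
      proof (intro sum.cong refl)
        fix a assume a: "a \<in> J d (B' \<inter> B)"
        have "(\<forall>n\<in>B' \<inter> B. a n = r n) \<longleftrightarrow> a = restrict r (B' \<inter> B)"
        proof
          assume h: "\<forall>n\<in>B' \<inter> B. a n = r n"
          show "a = restrict r (B' \<inter> B)"
          proof (rule ext)
            fix n show "a n = restrict r (B' \<inter> B) n"
              using h a unfolding J_def by (cases "n \<in> B' \<inter> B") (auto simp: PiE_iff extensional_def)
          qed
        qed simp
        then show "(f B' B a)^2 = (if a = restrict r (B' \<inter> B) then 1 else 0)"
          unfolding f_def using False by simp
      qed
      also have "\<dots> = 1" using a0 finite_J[of "B' \<inter> B" d] P.blk_fin[OF B] by (simp add: sum.delta)
      finally show ?thesis using False by simp
    qed
  qed
  also have "\<dots> = (\<Prod>B\<in>{B\<in>\<pi>. beta B = B'}. \<Sum>a\<in>J d (Cb B). (y B (restrict (\<lambda>n. if n \<in> beta B then a n else r n) B))^2)"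
    using P.fin_pi by (rule prod.inter_filter[symmetric])
  finally show ?thesis .
qed


lemma stepF:
  fixes y :: "nat set \<Rightarrow> (nat \<Rightarrow> nat) \<Rightarrow> real"
  assumes B: "B \<in> \<pi>" and y1: "(\<Sum>j\<in>J d B. (y B j)^2) = 1"
  shows "(\<Sum>b\<in>J d (Rb B). sqrt (\<Sum>a\<in>J d (Cb B). (y B (restrict (\<lambda>n. if n \<in> beta B then a n else b n) B))^2))
         \<le> sqrt (\<Prod>n\<in>Rb B. real (d n))"
proof -
  define t where "t b = (\<Sum>a\<in>J d (Cb B). (y B (restrict (\<lambda>n. if n \<in> beta B then a n else b n) B))^2)" for b
  have t0: "t b \<ge> 0" for b unfolding t_def by (simp add: sum_nonneg)
  have "(\<Sum>b\<in>J d (Rb B). t b) = (\<Sum>a\<in>J d (Cb B). \<Sum>b\<in>J d (Rb B). (y B (restrict (\<lambda>n. if n \<in> beta B then a n else b n) B))^2)"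
    unfolding t_def by (rule sum.swap)
  also have "\<dots> = (\<Sum>a\<in>J d (Cb B). \<Sum>b\<in>J d (Rb B). (y B (restrict (\<lambda>n. if n \<in> Cb B then a n else b n) (Cb B \<union> Rb B)))^2)"
  proof (intro sum.cong refl)
    fix a b :: "nat \<Rightarrow> nat"
    have "restrict (\<lambda>n. if n \<in> beta B then a n else b n) B = restrict (\<lambda>n. if n \<in> Cb B then a n else b n) (Cb B \<union> Rb B)"
      unfolding Cb_Rb(1)[symmetric] by (intro restrict_ext) (auto simp: Cb_def)
    then show "(y B (restrict (\<lambda>n. if n \<in> beta B then a n else b n) B))^2 = (y B (restrict (\<lambda>n. if n \<in> Cb B then a n else b n) (Cb B \<union> Rb B)))^2"
      by simp
  qed
  also have "\<dots> = (\<Sum>j\<in>J d (Cb B \<union> Rb B). (y B j)^2)"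
    using fin_Cb[OF B] fin_Rb[OF B] Cb_Rb(2) by (rule PF0[symmetric])
  also have "\<dots> = 1" using y1 Cb_Rb(1)[of B] by simp
  finally have tot: "(\<Sum>b\<in>J d (Rb B). t b) = 1" .
  have "(\<Sum>b\<in>J d (Rb B). 1 * sqrt (t b))^2 \<le> (\<Sum>b\<in>J d (Rb B). 1^2) * (\<Sum>b\<in>J d (Rb B). (sqrt (t b))^2)"
    by (rule Cauchy_Schwarz_ineq_sum)
  also have "\<dots> = real (card (J d (Rb B)))" using t0 tot by simp
  also have "\<dots> = (\<Prod>n\<in>Rb B. real (d n))" using card_J[OF fin_Rb[OF B]] by simp
  finally have "(\<Sum>b\<in>J d (Rb B). sqrt (t b))^2 \<le> (\<Prod>n\<in>Rb B. real (d n))" by simp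
  then have "(\<Sum>b\<in>J d (Rb B). sqrt (t b)) \<le> sqrt (\<Prod>n\<in>Rb B. real (d n))" by (rule real_le_rsqrt)
  then show ?thesis unfolding t_def .
qed

lemma Kmain:
  assumes k1: "k \<ge> 1"
  shows "P.N2 A \<le> sqrt Q * S.N2 A"
proof -
  have sne: "\<sigma> \<noteq> {}" using S.ex_blk[of 1] k1 by auto
  have N0: "S.N2 A \<ge> 0" by (rule tsetup.tp_nonneg[OF S.tsetup2 sne])
  have "P.N2 A \<le> S.N2 A * sqrt Q"
  proof (rule P.N2_le)
    fix y :: "nat set \<Rightarrow> (nat \<Rightarrow> nat) \<Rightarrow> real"
    assume y1: "\<forall>B\<in>\<pi>. (\<Sum>j\<in>J d B. (y B j)^2) = 1"
    define f where "f r B' B a = (if beta B = B' then y B (restrict (\<lambda>n. if n \<in> B' then a n else r n) B)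
                   else (if (\<forall>n\<in>B' \<inter> B. a n = r n) then 1 else (0::real)))" for r :: "nat \<Rightarrow> nat" and B' B a
    define w where "w r B' j = (\<Prod>B\<in>\<pi>. f r B' B (restrict j (B' \<inter> B)))" for r B' j
    define s where "s B b = (\<Sum>a\<in>J d (Cb B). (y B (restrict (\<lambda>n. if n \<in> beta B then a n else b n) B))^2)" for B b
    have A': "S.G A (w r) = (\<Sum>i\<in>{i\<in>J d {1..k}. restrict i Rall = r}. A i * (\<Prod>B\<in>\<pi>. y B (restrict i B)))"
      if r: "r \<in> J d Rall" for r
    proof -
      have "S.G A (w r) = (\<Sum>i\<in>J d {1..k}. A i * (if restrict i Rall = r then (\<Prod>B\<in>\<pi>. y B (restrict i B)) else 0))"
        unfolding S.G_def w_def f_def using stepA[OF r] by (intro sum.cong refl) simp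
      also have "\<dots> = (\<Sum>i\<in>{i\<in>J d {1..k}. restrict i Rall = r}. A i * (\<Prod>B\<in>\<pi>. y B (restrict i B)))"
        using finite_J[of "{1..k}" d] by (simp add: sum.inter_filter if_distrib cong: if_cong)
      finally show ?thesis .
    qed
    have C': "(\<Sum>j\<in>J d B'. (w r B' j)^2) = (\<Prod>B\<in>{B\<in>\<pi>. beta B = B'}. s B r)"
      if r: "r \<in> J d Rall" and B': "B' \<in> \<sigma>" for r B'
      unfolding w_def f_def s_def using stepC[OF r B'] by simp
    have E1: "s B r = s B (restrict r (Rb B))" if B: "B \<in> \<pi>" for B r
      unfolding s_def
    proof (intro sum.cong refl arg_cong[where f="\<lambda>z. z^2"] arg_cong[where f="y B"] restrict_ext)
      fix a n assume n: "n \<in> B"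
      show "(if n \<in> beta B then a n else r n) = (if n \<in> beta B then a n else restrict r (Rb B) n)"
        using n by (auto simp: Rb_def)
    qed
    have D: "(\<Prod>B'\<in>\<sigma>. sqrt (\<Sum>j\<in>J d B'. (w r B' j)^2)) = (\<Prod>B\<in>\<pi>. sqrt (s B (restrict r (Rb B))))"
      if r: "r \<in> J d Rall" for r
    proof -
      have "(\<Prod>B'\<in>\<sigma>. sqrt (\<Sum>j\<in>J d B'. (w r B' j)^2)) = (\<Prod>B'\<in>\<sigma>. \<Prod>B\<in>{B\<in>\<pi>. beta B = B'}. sqrt (s B r))"
      proof (intro prod.cong refl)
        fix B' assume B': "B' \<in> \<sigma>"
        have fin: "finite {B\<in>\<pi>. beta B = B'}" using P.fin_pi by simp
        show "sqrt (\<Sum>j\<in>J d B'. (w r B' j)^2) = (\<Prod>B\<in>{B\<in>\<pi>. beta B = B'}. sqrt (s B r))"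
          unfolding C'[OF r B'] by (rule sqrt_prod[OF fin])
      qed
      also have "\<dots> = (\<Prod>B\<in>\<pi>. sqrt (s B r))"
        by (rule prod.group[OF P.fin_pi S.fin_pi]) (use beta(1) in blast)
      also have "\<dots> = (\<Prod>B\<in>\<pi>. sqrt (s B (restrict r (Rb B))))"
        by (intro prod.cong refl arg_cong[where f=sqrt] E1)
      finally show ?thesis .
    qed
    have img: "(\<lambda>i. restrict i Rall) ` J d {1..k} \<subseteq> J d Rall"
      using restrict_mem_J Rall_sub by blast
    have "P.G A y = (\<Sum>r\<in>J d Rall. \<Sum>i\<in>{i\<in>J d {1..k}. restrict i Rall = r}. A i * (\<Prod>B\<in>\<pi>. y B (restrict i B)))"
      unfolding P.G_def by (rule sum.group[OF finite_J[OF finite_atLeastAtMost] finite_J[OF fin_Rall] img, symmetric])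
    also have "\<dots> = (\<Sum>r\<in>J d Rall. S.G A (w r))" by (rule sum.cong[OF refl], rule A'[symmetric])
    also have "\<dots> \<le> (\<Sum>r\<in>J d Rall. S.N2 A * (\<Prod>B'\<in>\<sigma>. sqrt (\<Sum>j\<in>J d B'. (w r B' j)^2)))"
      by (intro sum_mono S.G_le sne)
    also have "\<dots> = S.N2 A * (\<Sum>r\<in>J d Rall. \<Prod>B\<in>\<pi>. sqrt (s B (restrict r (Rb B))))"
      using D by (simp add: sum_distrib_left)
    also have "(\<Sum>r\<in>J d Rall. \<Prod>B\<in>\<pi>. sqrt (s B (restrict r (Rb B)))) = (\<Prod>B\<in>\<pi>. \<Sum>b\<in>J d (Rb B). sqrt (s B b))"
      unfolding Rall_def
    proof (rule PF[OF P.fin_pi])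
      show "\<forall>B\<in>\<pi>. finite (Rb B)" using fin_Rb by blast
      show "\<forall>B1\<in>\<pi>. \<forall>B2\<in>\<pi>. B1 \<noteq> B2 \<longrightarrow> Rb B1 \<inter> Rb B2 = {}" using Rb_disj by blast
    qed
    also have "\<dots> \<le> (\<Prod>B\<in>\<pi>. sqrt (\<Prod>n\<in>Rb B. real (d n)))"
    proof (rule prod_mono)
      fix B assume B: "B \<in> \<pi>"
      show "0 \<le> (\<Sum>b\<in>J d (Rb B). sqrt (s B b)) \<and> (\<Sum>b\<in>J d (Rb B). sqrt (s B b)) \<le> sqrt (\<Prod>n\<in>Rb B. real (d n))"
      proof
        show "0 \<le> (\<Sum>b\<in>J d (Rb B). sqrt (s B b))" by (intro sum_nonneg) (simp add: s_def sum_nonneg)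
        show "(\<Sum>b\<in>J d (Rb B). sqrt (s B b)) \<le> sqrt (\<Prod>n\<in>Rb B. real (d n))"
          using stepF[of B y, OF B y1[rule_format, OF B]] unfolding s_def .
      qed
    qed
    also have "\<dots> = sqrt Q" unfolding Q_def using sqrt_prod[OF P.fin_pi] by simp
    finally show "P.G A y \<le> S.N2 A * sqrt Q" using N0 by (simp add: mult_left_mono)
  qed
  then show ?thesis by (simp add: mult.commute)
qed

end




lemma inv_exp_2: "inv_exp 2 = 1/2"
  by (simp add: inv_exp_def)

lemma inv_exp_2': "inv_exp (ereal 2) = 1/2"
  by (simp add: inv_exp_def)

context psetup begin

lemma prod_dims: "real (\<Prod>B\<in>\<pi>. unfold_dims d B) = tdim k d"
proof -
  have "(\<Prod>B\<in>\<pi>. unfold_dims d B) = (\<Prod>n\<in>\<Union>\<pi>. d n)"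
    unfolding unfold_dims_def using blk_fin blk_unique by (subst prod.Union_disjoint) auto
  then show ?thesis by (simp add: tdim_def partition_onD1[OF part, symmetric])
qed

lemma dpos: "n \<in> {1..k} \<Longrightarrow> real (d n) > 0"
  using d1 by fastforce

lemma tdim_pos: "tdim k d > 0"
  unfolding tdim_def using dpos by (intro prod_pos) auto

lemma pi_ne: "k \<ge> 1 \<Longrightarrow> \<pi> \<noteq> {}"
  using ex_blk[of 1] by auto

lemma compare:
  assumes "k \<ge> 1" "1 \<le> p" "p \<le> q"
  shows "unfold_norm p k d \<pi> A \<le> unfold_norm q k d \<pi> A"
    and "unfold_norm q k d \<pi> A \<le> tdim k d powr (inv_exp p - inv_exp q) * unfold_norm p k d \<pi> A"
  using tp_compare[where M=\<pi> and e="unfold_dims d" and T="unfold k d \<pi> A", OF fin_pi pi_ne[OF assms(1)] dims1 assms(2,3)]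
  unfolding unfold_norm_def prod_dims by auto

end

context ppair begin

lemma dp_pos: "dim_pair d \<pi> \<sigma> > 0"
proof -
  have "dim_pair d \<pi> \<sigma> = (\<Prod>B\<in>\<pi>. Dm B)" by (simp add: dim_pair_def Dm_def)
  also have "\<dots> > 0"
  proof (rule prod_pos)
    fix B assume B: "B \<in> \<pi>"
    have "Cb B \<subseteq> {1..k}" using P.blk_sub[OF B] unfolding Cb_def by auto
    then have "(\<Prod>n\<in>Cb B. real (d n)) > 0" using P.dpos by (intro prod_pos) auto
    then show "Dm B > 0" using Dm_eq[OF B] by simp
  qed
  finally show ?thesis .
qed

lemma Q_pos: "Q > 0"
  unfolding Q_def
proof (intro prod_pos)
  fix B n assume B: "B \<in> \<pi>" and n: "n \<in> Rb B"
  have "n \<in> {1..k}" using P.blk_sub[OF B] n unfolding Rb_def by auto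
  then show "real (d n) > 0" by (rule P.dpos)
qed

lemma UB:
  assumes k1: "k \<ge> 1"
  shows "(1 \<le> p \<and> p \<le> 2 \<longrightarrow> unfold_norm p k d \<pi> A \<le> tdim k d powr (inv_exp p) / dim_pair d \<pi> \<sigma> powr (1/2) * unfold_norm p k d \<sigma> A)
       \<and> (2 \<le> p \<longrightarrow> unfold_norm p k d \<pi> A \<le> tdim k d powr (1 - inv_exp p) / dim_pair d \<pi> \<sigma> powr (1/2) * unfold_norm p k d \<sigma> A)"
proof -
  define D where "D = tdim k d"
  define P where "P = dim_pair d \<pi> \<sigma>"
  have D0: "D > 0" unfolding D_def by (rule P.tdim_pos)
  have P0: "P > 0" unfolding P_def by (rule dp_pos)
  have DPQ: "D = P * Q" unfolding D_def P_def by (rule tdim_split)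
  have K: "unfold_norm 2 k d \<pi> A \<le> sqrt Q * unfold_norm 2 k d \<sigma> A"
    unfolding unfold_norm_def by (rule Kmain[OF k1])
  have sQ: "sqrt Q = D powr (1/2) / P powr (1/2)"
    using Q_pos P0 by (simp add: DPQ powr_mult powr_half_sqrt)
  have sQ0: "sqrt Q \<ge> 0" using Q_pos by simp
  have hD: "D powr (1/2) > 0" using D0 by simp
  have hP: "P powr (1/2) > 0" using P0 by simp
  have N0: "unfold_norm 2 k d \<sigma> A \<ge> 0"
    unfolding unfold_norm_def by (rule tsetup.tp_nonneg[OF S.tsetup2 S.pi_ne[OF k1]])
  have c1: "1 \<le> p \<and> p \<le> 2 \<longrightarrow> unfold_norm p k d \<pi> A \<le> D powr (inv_exp p) / P powr (1/2) * unfold_norm p k d \<sigma> A"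
  proof
    assume p: "1 \<le> p \<and> p \<le> 2"
    have a: "unfold_norm p k d \<pi> A \<le> unfold_norm 2 k d \<pi> A"
      using P.compare(1)[OF k1, of p "2::ereal"] p by simp
    have b: "unfold_norm 2 k d \<sigma> A \<le> D powr (inv_exp p - 1/2) * unfold_norm p k d \<sigma> A"
      using S.compare(2)[OF k1, of p "2::ereal"] p by (simp add: inv_exp_2 inv_exp_2' D_def)
    have "unfold_norm p k d \<pi> A \<le> sqrt Q * (D powr (inv_exp p - 1/2) * unfold_norm p k d \<sigma> A)"
      using a K mult_left_mono[OF b sQ0] by linarith
    also have "sqrt Q * (D powr (inv_exp p - 1/2) * unfold_norm p k d \<sigma> A) = D powr (inv_exp p) / P powr (1/2) * unfold_norm p k d \<sigma> A"
    proof -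
      have "D powr (inv_exp p - 1/2) = D powr (inv_exp p) / D powr (1/2)" by (rule powr_diff)
      then show ?thesis unfolding sQ using hD hP by (simp add: field_simps)
    qed
    finally show "unfold_norm p k d \<pi> A \<le> D powr (inv_exp p) / P powr (1/2) * unfold_norm p k d \<sigma> A" .
  qed
  have c2: "2 \<le> p \<longrightarrow> unfold_norm p k d \<pi> A \<le> D powr (1 - inv_exp p) / P powr (1/2) * unfold_norm p k d \<sigma> A"
  proof
    assume p: "2 \<le> p"
    have a: "unfold_norm p k d \<pi> A \<le> D powr (1/2 - inv_exp p) * unfold_norm 2 k d \<pi> A"
      using P.compare(2)[OF k1, of "2::ereal" p] p by (simp add: inv_exp_2 inv_exp_2' D_def)
    have b: "unfold_norm 2 k d \<sigma> A \<le> unfold_norm p k d \<sigma> A"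
      using S.compare(1)[OF k1, of "2::ereal" p] p by simp
    have "unfold_norm 2 k d \<pi> A \<le> sqrt Q * unfold_norm p k d \<sigma> A"
      using K mult_left_mono[OF b sQ0] by linarith
    then have "unfold_norm p k d \<pi> A \<le> D powr (1/2 - inv_exp p) * (sqrt Q * unfold_norm p k d \<sigma> A)"
      using a by (meson mult_left_mono order_trans powr_ge_zero)
    also have "D powr (1/2 - inv_exp p) * (sqrt Q * unfold_norm p k d \<sigma> A) = D powr (1 - inv_exp p) / P powr (1/2) * unfold_norm p k d \<sigma> A"
    proof -
      have "D powr (1/2 - inv_exp p) = D powr (1 - inv_exp p) / D powr (1/2)"
        using D0 by (simp add: powr_diff[symmetric])
      then show ?thesis unfolding sQ using hD hP by (simp add: field_simps)
    qed
    finally show "unfold_norm p k d \<pi> A \<le> D powr (1 - inv_exp p) / P powr (1/2) * unfold_norm p k d \<sigma> A" .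
  qed
  show ?thesis using c1 c2 unfolding D_def P_def by blast
qed

end

lemma inv_div_aux: "(a::real) \<noteq> 0 \<Longrightarrow> b \<noteq> 0 \<Longrightarrow> inverse a / inverse b = b / a"
  by (simp add: field_simps)

theorem theorem4p16:
  fixes k :: nat and d :: "nat \<Rightarrow> nat" and A :: "(nat \<Rightarrow> nat) \<Rightarrow> real"
    and \<pi>1 \<pi>2 :: "nat set set" and p :: ereal
  assumes "\<forall>n\<in>{1..k}. d n \<ge> 1"
    and "partition_on {1..k} \<pi>1" and "partition_on {1..k} \<pi>2"
  shows "(1 \<le> p \<and> p \<le> 2 \<longrightarrow>
            tdim k d powr (- inv_exp p) / dim_pair d \<pi>1 \<pi>2 powr (-1/2) * unfold_norm p k d \<pi>1 A
              \<le> unfold_norm p k d \<pi>2 A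
          \<and> unfold_norm p k d \<pi>2 A
              \<le> tdim k d powr (inv_exp p) / dim_pair d \<pi>2 \<pi>1 powr (1/2) * unfold_norm p k d \<pi>1 A)
       \<and> (2 \<le> p \<longrightarrow>
            tdim k d powr (inv_exp p - 1) / dim_pair d \<pi>1 \<pi>2 powr (-1/2) * unfold_norm p k d \<pi>1 A
              \<le> unfold_norm p k d \<pi>2 A
          \<and> unfold_norm p k d \<pi>2 A
              \<le> tdim k d powr (1 - inv_exp p) / dim_pair d \<pi>2 \<pi>1 powr (1/2) * unfold_norm p k d \<pi>1 A)"
proof (cases "k = 0")
  case True
  then have "\<pi>1 = {}" "\<pi>2 = {}" using assms(2,3) by (simp_all add: partition_on_empty)
  then show ?thesis using True by (simp add: tdim_def dim_pair_def)
next
  case False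
  then have k1: "k \<ge> 1" by simp
  interpret P12: ppair k d \<pi>1 \<pi>2 using assms by unfold_locales auto
  interpret P21: ppair k d \<pi>2 \<pi>1 using assms by unfold_locales auto
  have D0: "tdim k d > 0" by (rule P12.P.tdim_pos)
  have P0: "dim_pair d \<pi>1 \<pi>2 > 0" by (rule P12.dp_pos)
  note U12 = P12.UB[OF k1, of p A]
  note U21 = P21.UB[OF k1, of p A]
  have L: "tdim k d powr (- x) / dim_pair d \<pi>1 \<pi>2 powr (-1/2) * unfold_norm p k d \<pi>1 A \<le> unfold_norm p k d \<pi>2 A"
    if h: "unfold_norm p k d \<pi>1 A \<le> tdim k d powr x / dim_pair d \<pi>1 \<pi>2 powr (1/2) * unfold_norm p k d \<pi>2 A" for x
  proof -
    let ?a = "tdim k d powr x" and ?b = "dim_pair d \<pi>1 \<pi>2 powr (1/2)"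
    have a0: "?a > 0" using D0 by simp
    have b0: "?b > 0" using P0 by simp
    have m: "-1/2 = -(1/2::real)" by simp
    have c: "tdim k d powr (- x) / dim_pair d \<pi>1 \<pi>2 powr (-1/2) = ?b / ?a"
      unfolding m powr_minus using a0 b0 by (intro inv_div_aux) simp_all
    have "?b / ?a * unfold_norm p k d \<pi>1 A \<le> ?b / ?a * (?a / ?b * unfold_norm p k d \<pi>2 A)"
      using h a0 b0 by (intro mult_left_mono) simp_all
    also have "\<dots> = (?b / ?a * (?a / ?b)) * unfold_norm p k d \<pi>2 A" by (rule mult.assoc[symmetric])
    also have "?b / ?a * (?a / ?b) = 1" using a0 b0 by (simp add: divide_simps)
    also have "1 * unfold_norm p k d \<pi>2 A = unfold_norm p k d \<pi>2 A" by (rule mult_1_left)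
    finally show ?thesis unfolding c .
  qed
  have e2: "inv_exp p - 1 = - (1 - inv_exp p)" by simp
  show ?thesis
  proof (intro conjI impI)
    assume p: "1 \<le> p \<and> p \<le> 2"
    show "tdim k d powr (- inv_exp p) / dim_pair d \<pi>1 \<pi>2 powr (-1/2) * unfold_norm p k d \<pi>1 A \<le> unfold_norm p k d \<pi>2 A"
      using U12 p by (intro L) blast
    show "unfold_norm p k d \<pi>2 A \<le> tdim k d powr (inv_exp p) / dim_pair d \<pi>2 \<pi>1 powr (1/2) * unfold_norm p k d \<pi>1 A"
      using U21 p by blast
  next
    assume p: "2 \<le> p"
    show "tdim k d powr (inv_exp p - 1) / dim_pair d \<pi>1 \<pi>2 powr (-1/2) * unfold_norm p k d \<pi>1 A \<le> unfold_norm p k d \<pi>2 A"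
      unfolding e2 using U12 p by (intro L) blast
    show "unfold_norm p k d \<pi>2 A \<le> tdim k d powr (1 - inv_exp p) / dim_pair d \<pi>2 \<pi>1 powr (1/2) * unfold_norm p k d \<pi>1 A"
      using U21 p by blast
  qed
qed


end
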